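(* For every $n\in\mathbb{N}$, every proper subinterval of $I_{n+1}$ is a subinterval of $I_n$ or of $\ell_nI_n$.
   Context: $\mathbb{F}$ is the free group on generators $a,b$ with identity $e$. For $n=4k+i$ with $k\in\mathbb{N}$ and $0\le i<4$, set $\ell_n=a,a^{-1},b,b^{-1}$ according as $i=0,1,2,3$. For $g\in\mathbb{F}$ and $S\subseteq\mathbb{F}$ let $gS=\{gs:s\in S\}$. Define $I_0=\{e\}$ and $I_{n+1}=I_n\cup\ell_nI_n$. An interval of $\mathbb{F}$ is either the empty set or a set of the form $wI_n$ with $w\in\mathbb{F}$, $n\in\mathbb{N}$; $\mathbb{I}$ denotes the set of intervals. If $I,J\in\mathbb{I}$ and $J\subseteq I$, $J$ is a subinterval of $I$, written $J\le I$. *)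

theory Defs
  imports Main
begin

text \<open>The free group F on generators a, b, modelled by freely reduced words.
  A letter is a generator together with a sign: (A, True) is a, (A, False) is a^-1.\<close>

datatype gen = A | B

type_synonym letter = "gen \<times> bool"

definition inv_letter :: "letter \<Rightarrow> letter" where
  "inv_letter x = (fst x, \<not> snd x)"

fun cons_red :: "letter \<Rightarrow> letter list \<Rightarrow> letter list" where
  "cons_red x [] = [x]"
| "cons_red x (y # ys) = (if y = inv_letter x then ys else x # y # ys)"

definition reduce :: "letter list \<Rightarrow> letter list" where
  "reduce w = foldr cons_red w []"

fun reduced :: "letter list \<Rightarrow> bool" where
  "reduced [] = True"
| "reduced [x] = True"
| "reduced (x # y # ys) = (y \<noteq> inv_letter x \<and> reduced (y # ys))"

typedef fgroup = "{w :: letter list. reduced w}"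
  by (rule exI[of _ "[]"]) simp

definition fmult :: "fgroup \<Rightarrow> fgroup \<Rightarrow> fgroup" (infixl "\<cdot>" 70) where
  "g \<cdot> h = Abs_fgroup (reduce (Rep_fgroup g @ Rep_fgroup h))"

definition fe :: fgroup where "fe = Abs_fgroup []"

definition fa :: fgroup where "fa = Abs_fgroup [(A, True)]"
definition fa_inv :: fgroup where "fa_inv = Abs_fgroup [(A, False)]"
definition fb :: fgroup where "fb = Abs_fgroup [(B, True)]"
definition fb_inv :: fgroup where "fb_inv = Abs_fgroup [(B, False)]"

definition ell :: "nat \<Rightarrow> fgroup" where
  "ell n = (if n mod 4 = 0 then fa else if n mod 4 = 1 then fa_inv
            else if n mod 4 = 2 then fb else fb_inv)"

definition lmult :: "fgroup \<Rightarrow> fgroup set \<Rightarrow> fgroup set" where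
  "lmult g S = (\<lambda>s. g \<cdot> s) ` S"

fun Iv :: "nat \<Rightarrow> fgroup set" where
  "Iv 0 = {fe}"
| "Iv (Suc n) = Iv n \<union> lmult (ell n) (Iv n)"

definition intervals :: "fgroup set set" where
  "intervals = {{}} \<union> {lmult w (Iv n) | w n. True}"

definition subinterval :: "fgroup set \<Rightarrow> fgroup set \<Rightarrow> bool" where
  "subinterval J I \<longleftrightarrow> I \<in> intervals \<and> J \<in> intervals \<and> J \<subseteq> I"

end

theory Submission
  imports Defs
begin

lemma inv_inv[simp]: "inv_letter (inv_letter x) = x"
  by (simp add: inv_letter_def)

lemma inv_neq[simp]: "inv_letter x \<noteq> x" "x \<noteq> inv_letter x"
  by (auto simp: inv_letter_def prod_eq_iff)

lemma reduced_succ: "reduced xs = successively (\<lambda>x y. y \<noteq> inv_letter x) xs"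
  by (induction xs rule: reduced.induct) auto

lemma reduced_tl: "reduced (y # ys) \<Longrightarrow> reduced ys"
  by (cases ys) auto

lemma cons_red_reduced: "reduced ys \<Longrightarrow> reduced (cons_red x ys)"
  by (cases ys) (auto dest: reduced_tl)

lemma foldr_reduced: "reduced z \<Longrightarrow> reduced (foldr cons_red xs z)"
  by (induction xs) (auto intro: cons_red_reduced)

lemma reduced_reduce: "reduced (reduce w)"
  unfolding reduce_def by (rule foldr_reduced) simp

lemma reduce_reduced: "reduced w \<Longrightarrow> reduce w = w"
proof (induction w rule: reduced.induct)
  case 1 then show ?case by (simp add: reduce_def)
next
  case (2 x) then show ?case by (simp add: reduce_def)
next
  case (3 x y ys) then show ?case by (simp add: reduce_def)
qed

lemma cancel: "reduced ys \<Longrightarrow> cons_red x (cons_red (inv_letter x) ys) = ys"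
proof (cases ys)
  case Nil then show ?thesis by simp
next
  case (Cons y ys')
  assume r: "reduced ys"
  show ?thesis
  proof (cases "y = x")
    case True
    then show ?thesis using r Cons by (cases ys') auto
  next
    case False
    then show ?thesis using Cons by simp
  qed
qed

lemma swap: "reduced r \<Longrightarrow> reduced z \<Longrightarrow>
  foldr cons_red (cons_red x r) z = cons_red x (foldr cons_red r z)"
proof (cases r)
  case Nil then show ?thesis by simp
next
  case (Cons y r')
  assume z: "reduced z"
  show ?thesis
  proof (cases "y = inv_letter x")
    case True
    then show ?thesis using Cons cancel[OF foldr_reduced[OF z], of x r'] by simp
  next
    case False then show ?thesis using Cons by simp
  qed
qed

lemma foldr_reduce: "reduced z \<Longrightarrow> foldr cons_red (reduce xs) z = foldr cons_red xs z"
proof (induction xs)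
  case Nil then show ?case by (simp add: reduce_def)
next
  case (Cons x xs)
  have "foldr cons_red (reduce (x # xs)) z = foldr cons_red (cons_red x (reduce xs)) z"
    by (simp add: reduce_def)
  also have "\<dots> = cons_red x (foldr cons_red (reduce xs) z)"
    by (rule swap[OF reduced_reduce Cons.prems])
  finally show ?case using Cons by simp
qed

lemma reduce_append: "reduce (xs @ ys) = foldr cons_red xs (reduce ys)"
  by (simp add: reduce_def)

lemma inv_foldr: "reduced z \<Longrightarrow>
  foldr cons_red (rev (map inv_letter G)) (foldr cons_red G z) = z"
proof (induction G arbitrary: z)
  case Nil then show ?case by simp
next
  case (Cons x G)
  have "foldr cons_red (rev (map inv_letter (x # G))) (foldr cons_red (x # G) z)
     = foldr cons_red (rev (map inv_letter G))
         (cons_red (inv_letter x) (cons_red (inv_letter (inv_letter x)) (foldr cons_red G z)))"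
    by simp
  also have "\<dots> = foldr cons_red (rev (map inv_letter G)) (foldr cons_red G z)"
    using cancel[OF foldr_reduced[OF Cons.prems], of "inv_letter x" G] by simp
  finally show ?case using Cons by simp
qed

lemma reduced_rev_inv: "reduced G \<Longrightarrow> reduced (rev (map inv_letter G))"
  unfolding reduced_succ successively_rev successively_map
  by (erule successively_mono) (metis inv_inv)

lemma Rep_red[simp]: "reduced (Rep_fgroup g)"
  using Rep_fgroup by simp

lemma Rep_mult: "Rep_fgroup (g \<cdot> h) = reduce (Rep_fgroup g @ Rep_fgroup h)"
  unfolding fmult_def by (simp add: Abs_fgroup_inverse reduced_reduce)

definition finv :: "fgroup \<Rightarrow> fgroup" where
  "finv g = Abs_fgroup (rev (map inv_letter (Rep_fgroup g)))"

lemma Rep_finv: "Rep_fgroup (finv g) = rev (map inv_letter (Rep_fgroup g))"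
  unfolding finv_def by (simp add: Abs_fgroup_inverse reduced_rev_inv)

lemma Rep_fe[simp]: "Rep_fgroup fe = []"
  unfolding fe_def by (simp add: Abs_fgroup_inverse)

instantiation fgroup :: group_add
begin
definition "plus_fgroup = fmult"
definition "zero_fgroup = fe"
definition "uminus_fgroup = finv"
definition "minus_fgroup g h = fmult g (finv h)"
instance
proof
  fix a b c :: fgroup
  show "a + b + c = a + (b + c)"
  proof -
    let ?A = "Rep_fgroup a" and ?B = "Rep_fgroup b" and ?C = "Rep_fgroup c"
    have "reduce (reduce (?A @ ?B) @ ?C) = foldr cons_red (?A @ ?B) (reduce ?C)"
      by (subst reduce_append, rule foldr_reduce[OF reduced_reduce])
    also have "\<dots> = reduce (?A @ reduce (?B @ ?C))"
      by (simp add: reduce_append reduce_reduced foldr_reduced reduced_reduce)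
    finally show ?thesis
      unfolding plus_fgroup_def Rep_fgroup_inject[symmetric] Rep_mult .
  qed
  show "0 + a = a"
    unfolding plus_fgroup_def fmult_def zero_fgroup_def
    by (simp add: reduce_reduced Rep_fgroup_inverse)
  show "a + 0 = a"
    unfolding plus_fgroup_def fmult_def zero_fgroup_def
    by (simp add: reduce_reduced Rep_fgroup_inverse)
  show "- a + a = 0"
    unfolding plus_fgroup_def fmult_def zero_fgroup_def uminus_fgroup_def
    using inv_foldr[of "[]" "Rep_fgroup a"] reduce_reduced[of "Rep_fgroup a", unfolded reduce_def]
    by (simp add: Rep_finv reduce_append reduce_reduced fe_def)
  show "a + - b = a - b"
    by (simp add: plus_fgroup_def uminus_fgroup_def minus_fgroup_def)
qed
end

lemma fmult_plus: "g \<cdot> h = g + h" by (simp add: plus_fgroup_def)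
lemma fe_zero[simp]: "fe = 0" by (simp add: zero_fgroup_def)
lemma Rep_zero[simp]: "Rep_fgroup 0 = []" using Rep_fe by (simp only: fe_zero)

definition len :: "fgroup \<Rightarrow> nat" where "len g = length (Rep_fgroup g)"

lemma len_zero_iff: "len g = 0 \<longleftrightarrow> g = 0"
proof
  assume "len g = 0"
  then have "Rep_fgroup g = Rep_fgroup 0" by (simp add: len_def)
  then show "g = 0" by (metis Rep_fgroup_inject zero_fgroup_def)
qed (simp add: len_def)

lemma len_uminus[simp]: "len (- g) = len g"
  by (simp add: len_def uminus_fgroup_def Rep_finv)

lemma foldr_append_reduced: "reduced (xs @ ys) \<Longrightarrow> foldr cons_red xs ys = xs @ ys"
proof (induction xs)
  case Nil then show ?case by simp
next
  case (Cons x xs)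
  then have IH: "foldr cons_red xs ys = xs @ ys" by (auto dest: reduced_tl)
  show ?case
  proof (cases "xs @ ys")
    case Nil then show ?thesis using IH by simp
  next
    case (Cons y r) then show ?thesis using IH Cons.prems by simp
  qed
qed

lemma length_cons_red: "length (cons_red x ys) \<le> Suc (length ys)"
  by (cases ys) auto

lemma length_foldr: "length (foldr cons_red xs ys) \<le> length xs + length ys"
proof (induction xs)
  case Nil then show ?case by simp
next
  case (Cons x xs)
  then show ?case using length_cons_red[of x "foldr cons_red xs ys"] by simp
qed

lemma Rep_minus_plus: "Rep_fgroup (- g + h) =
   foldr cons_red (rev (map inv_letter (Rep_fgroup g))) (Rep_fgroup h)"
  by (simp add: plus_fgroup_def uminus_fgroup_def Rep_mult Rep_finv reduce_append reduce_reduced)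

lemma tree_len: "len (- g + h) = len g + len h \<longleftrightarrow>
   (Rep_fgroup g = [] \<or> Rep_fgroup h = [] \<or> hd (Rep_fgroup g) \<noteq> hd (Rep_fgroup h))"
proof -
  let ?G = "Rep_fgroup g" and ?H = "Rep_fgroup h"
  show ?thesis
  proof (cases "?G = [] \<or> ?H = [] \<or> hd ?G \<noteq> hd ?H")
    case True
    have "reduced (rev (map inv_letter ?G) @ ?H)"
      unfolding reduced_succ successively_append_iff
      using True reduced_rev_inv[of ?G] Rep_red[of g] Rep_red[of h]
      by (auto simp: reduced_succ last_rev hd_map)
    then have "Rep_fgroup (- g + h) = rev (map inv_letter ?G) @ ?H"
      by (simp add: Rep_minus_plus foldr_append_reduced)
    then show ?thesis using True by (simp add: len_def)
  next
    case False
    then obtain x G' H' where G: "?G = x # G'" and H: "?H = x # H'"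
      by (cases ?G; cases ?H) auto
    have "Rep_fgroup (- g + h) = foldr cons_red (rev (map inv_letter G')) H'"
      unfolding Rep_minus_plus G H by simp
    then have "len (- g + h) \<le> length G' + length H'"
      using length_foldr[of "rev (map inv_letter G')" H'] by (simp add: len_def)
    then show ?thesis using False G H by (simp add: len_def)
  qed
qed

definition dist :: "fgroup \<Rightarrow> fgroup \<Rightarrow> nat" where "dist x y = len (- x + y)"

lemma dist_translate[simp]: "dist (g + x) (g + y) = dist x y"
  by (simp add: dist_def minus_add add.assoc[symmetric])

lemma dist_sym: "dist x y = dist y x"
proof -
  have "- y + x = - (- x + y)" by (simp add: minus_add)
  then show ?thesis by (simp add: dist_def)
qed

lemma dist_0: "dist x 0 = len x" "dist 0 x = len x"
  by (simp_all add: dist_def)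

lemma tripod0: "len (- X + Y) = len X + len Y \<Longrightarrow>
   len (- X + W) = len X + len W \<or> len (- W + Y) = len W + len Y"
  unfolding tree_len by auto

lemma tripod_0: "dist X 0 + dist 0 Y = dist X Y \<Longrightarrow>
   dist X 0 + dist 0 W = dist X W \<or> dist W 0 + dist 0 Y = dist W Y"
  using tripod0[of X Y W] by (simp add: dist_def eq_commute)

lemma tripod: "dist x z + dist z y = dist x y \<Longrightarrow>
   dist x z + dist z w = dist x w \<or> dist w z + dist z y = dist w y"
proof -
  assume h: "dist x z + dist z y = dist x y"
  have e: "\<And>u v. dist u v = dist (- z + u) (- z + v)" by simp
  have ez: "- z + z = 0" by simp
  have "dist (- z + x) 0 + dist 0 (- z + y) = dist (- z + x) (- z + y)"
    using h unfolding e[of x z] e[of z y] e[of x y] ez .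
  then have "dist (- z + x) 0 + dist 0 (- z + w) = dist (- z + x) (- z + w) \<or>
      dist (- z + w) 0 + dist 0 (- z + y) = dist (- z + w) (- z + y)"
    by (rule tripod_0)
  then show ?thesis
    unfolding e[of x z] e[of z w] e[of x w] e[of w z] e[of z y] e[of w y] ez .
qed


definition convex_set :: "fgroup set \<Rightarrow> bool" where
  "convex_set M \<longleftrightarrow> (\<forall>x\<in>M. \<forall>y\<in>M. \<forall>z. dist x z + dist z y = dist x y \<longrightarrow> z \<in> M)"

lemma lmult_plus: "lmult g S = (\<lambda>s. g + s) ` S"
  by (simp add: lmult_def fmult_plus)

lemma dist_eq0: "dist x y = 0 \<Longrightarrow> y = x"
proof -
  assume "dist x y = 0"
  then have "- x + y = 0" by (simp add: dist_def len_zero_iff)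
  then have "x + (- x + y) = x" by simp
  then show "y = x" by (simp add: add.assoc[symmetric])
qed

lemma convex_translate: "convex_set M \<Longrightarrow> convex_set ((\<lambda>s. g + s) ` M)"
  unfolding convex_set_def
proof (intro ballI allI impI)
  fix x' y' z
  assume M: "\<forall>x\<in>M. \<forall>y\<in>M. \<forall>z. dist x z + dist z y = dist x y \<longrightarrow> z \<in> M"
    and x': "x' \<in> (+) g ` M" and y': "y' \<in> (+) g ` M"
    and d: "dist x' z + dist z y' = dist x' y'"
  from x' obtain x where x: "x \<in> M" "x' = g + x" by auto
  from y' obtain y where y: "y \<in> M" "y' = g + y" by auto
  have z: "z = g + (- g + z)" by (simp add: add.assoc[symmetric])
  have "dist x (- g + z) + dist (- g + z) y = dist x y"
    using d unfolding x y by (metis dist_translate z)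
  then have "- g + z \<in> M" using M x y by blast
  then show "z \<in> (+) g ` M" using z by (metis image_eqI)
qed

lemma convex_Un: "convex_set M1 \<Longrightarrow> convex_set M2 \<Longrightarrow> w \<in> M1 \<Longrightarrow> w \<in> M2 \<Longrightarrow>
  convex_set (M1 \<union> M2)"
  unfolding convex_set_def
proof (intro ballI allI impI)
  fix x y z
  assume C1: "\<forall>x\<in>M1. \<forall>y\<in>M1. \<forall>z. dist x z + dist z y = dist x y \<longrightarrow> z \<in> M1"
    and C2: "\<forall>x\<in>M2. \<forall>y\<in>M2. \<forall>z. dist x z + dist z y = dist x y \<longrightarrow> z \<in> M2"
    and w: "w \<in> M1" "w \<in> M2" and x: "x \<in> M1 \<union> M2" and y: "y \<in> M1 \<union> M2"
    and d: "dist x z + dist z y = dist x y"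
  have cross: "z \<in> M1 \<union> M2" if "a \<in> M1" "b \<in> M2" "dist a z + dist z b = dist a b" for a b
    using tripod[OF that(3), of w] C1 C2 that(1,2) w by blast
  show "z \<in> M1 \<union> M2"
  proof -
    { assume "x \<in> M1" "y \<in> M1" then have ?thesis using C1 d by blast }
    moreover
    { assume "x \<in> M2" "y \<in> M2" then have ?thesis using C2 d by blast }
    moreover
    { assume "x \<in> M1" "y \<in> M2" then have ?thesis using cross d by blast }
    moreover
    { assume "x \<in> M2" "y \<in> M1" then have ?thesis using cross[of y x] d
        by (simp add: dist_sym add.commute) }
    ultimately show ?thesis using x y by blast
  qed
qed

lemma len_0[simp]: "len 0 = 0" by (simp add: len_zero_iff)
lemma dist_self[simp]: "dist x x = 0" by (simp add: dist_def)

lemma convex_0: "convex_set {0}"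
  unfolding convex_set_def using dist_eq0 by auto

lemma convex_two: "len l = 1 \<Longrightarrow> convex_set {0, l}"
  unfolding convex_set_def
proof (intro ballI allI impI)
  fix x y z
  assume l: "len l = 1" and x: "x \<in> {0, l}" and y: "y \<in> {0, l}"
    and d: "dist x z + dist z y = dist x y"
  have same: "z = u" if "dist u z + dist z u = dist u u" for u
    using that dist_eq0[of u z] by (simp add: dist_def)
  have diff: "z \<in> {0, l}" if "dist 0 z + dist z l = 1"
  proof -
    from that have "dist 0 z = 0 \<or> dist z l = 0" by arith
    then show ?thesis using dist_eq0[of 0 z] dist_eq0[of z l] by auto
  qed
  have d0l: "dist 0 l = 1" "dist l 0 = 1" using l by (simp_all add: dist_0)
  show "z \<in> {0, l}"
    using x y d same[of x] diff d0l by (auto simp: dist_sym add.commute)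
qed

lemma Rep_ell: "\<exists>x. Rep_fgroup (ell n) = [x]"
proof -
  have "\<And>x. Rep_fgroup (Abs_fgroup [x]) = [x]" by (simp add: Abs_fgroup_inverse)
  then show ?thesis unfolding ell_def fa_def fa_inv_def fb_def fb_inv_def
    by (auto split: if_split)
qed

lemma len_ell: "len (ell n) = 1"
  using Rep_ell[of n] by (auto simp: len_def)

lemma len_ell2: "len (ell n + ell n) = 2"
proof -
  obtain x where x: "Rep_fgroup (ell n) = [x]" using Rep_ell by blast
  have "Rep_fgroup (ell n + ell n) = [x, x]"
    by (simp add: plus_fgroup_def Rep_mult x reduce_def)
  then show ?thesis by (simp add: len_def)
qed

fun R :: "nat \<Rightarrow> nat \<Rightarrow> fgroup set" where
  "R p 0 = {0}"
| "R p (Suc t) = R p t \<union> (\<lambda>s. ell (p + t) + s) ` R p t"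

lemma zero_R: "0 \<in> R p t"
  by (induction t) auto

lemma convex_R: "convex_set (R p t)"
proof (induction t)
  case 0 then show ?case by (simp add: convex_0)
next
  case (Suc t)
  let ?l = "ell (p + t)"
  have l: "?l \<in> (\<lambda>s. ?l + s) ` R p t" using zero_R[of p t] by (metis add_0_right image_eqI)
  have eq: "R p (Suc t) = (R p t \<union> {0, ?l}) \<union> (\<lambda>s. ?l + s) ` R p t"
    using l zero_R[of p t] by auto
  have c1: "convex_set (R p t \<union> {0, ?l})"
    by (rule convex_Un[OF Suc convex_two[OF len_ell] zero_R]) simp
  show ?case unfolding eq
    by (rule convex_Un[OF c1 convex_translate[OF Suc], of ?l]) (use l in auto)
qed

lemma F1: "Iv (p + t) = (\<Union>x\<in>R p t. (\<lambda>s. x + s) ` Iv p)"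
proof (induction t)
  case 0 then show ?case by simp
next
  case (Suc t)
  have "Iv (p + Suc t) = Iv (p + t) \<union> (\<lambda>s. ell (p + t) + s) ` Iv (p + t)"
    by (simp add: lmult_plus)
  then show ?case unfolding Suc
    by (simp add: image_UN UN_Un image_image add.assoc)
qed

lemma F2: "R p (Suc t) = R (Suc p) t \<union> (\<lambda>v. v + ell p) ` R (Suc p) t"
proof (induction t)
  case 0 then show ?case by simp
next
  case (Suc t)
  have "R p (Suc (Suc t)) = R p (Suc t) \<union> (\<lambda>s. ell (Suc p + t) + s) ` R p (Suc t)"
    by simp
  also have "\<dots> = R (Suc p) (Suc t) \<union> (\<lambda>v. v + ell p) ` R (Suc p) (Suc t)"
    unfolding Suc by (simp add: image_Un image_image add.assoc Un_ac)
  finally show ?case .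
qed


lemma Iv0: "Iv 0 = {0}" by (simp add: fe_zero)

lemma R_I: "R 0 t = Iv t"
  using F1[of 0 t] by (simp add: Iv0)

lemma Iv_Suc_split: "(\<lambda>s. w + s) ` Iv (Suc m) =
   (\<lambda>s. w + s) ` Iv m \<union> (\<lambda>s. (w + ell m) + s) ` Iv m"
  by (simp add: lmult_plus image_Un image_image add.assoc)

lemma claim: "m \<le> Suc n \<Longrightarrow> (\<lambda>s. w + s) ` Iv m \<subseteq> Iv (Suc n) \<Longrightarrow> w \<in> R m (Suc n - m)"
proof (induction m arbitrary: w)
  case 0
  then have "w + 0 \<in> Iv (Suc n)" by (auto simp: Iv0)
  then show ?case by (simp add: R_I lmult_plus)
next
  case (Suc m)
  let ?l = "ell m"
  have mn: "m \<le> n" using Suc.prems by simp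
  have h1: "(\<lambda>s. w + s) ` Iv m \<subseteq> Iv (Suc n)"
    and h2: "(\<lambda>s. (w + ?l) + s) ` Iv m \<subseteq> Iv (Suc n)"
    using Suc.prems(2) unfolding Iv_Suc_split by auto
  define E where "E = R (Suc m) (n - m)"
  have RE: "R m (Suc n - m) = E \<union> (\<lambda>v. v + ?l) ` E"
    using F2[of m "n - m"] mn by (simp add: E_def Suc_diff_le)
  have w1: "w \<in> E \<union> (\<lambda>v. v + ?l) ` E" using Suc.IH[OF _ h1] mn RE by simp
  have w2: "w + ?l \<in> E \<union> (\<lambda>v. v + ?l) ` E" using Suc.IH[OF _ h2] mn RE by simp
  have "w \<in> E"
  proof (rule ccontr)
    assume nw: "w \<notin> E"
    with w1 obtain v where v: "v \<in> E" "w = v + ?l" by auto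
    show False
    proof (cases "w + ?l \<in> E")
      case True
      have d: "dist v (v + ?l) + dist (v + ?l) (v + ?l + ?l) = dist v (v + ?l + ?l)"
      proof -
        have a: "dist v (v + ?l) = 1"
          using dist_translate[of v 0 ?l] len_ell[of m] by (simp add: dist_0)
        have b: "dist (v + ?l) (v + ?l + ?l) = 1"
          using dist_translate[of "v + ?l" 0 ?l] len_ell[of m] by (simp add: dist_0)
        have c: "dist v (v + ?l + ?l) = 2"
          using dist_translate[of v 0 "?l + ?l"] len_ell2[of m] by (simp add: dist_0 add.assoc)
        show ?thesis using a b c by simp
      qed
      have "v + ?l + ?l \<in> E" using True v by simp
      then have "v + ?l \<in> E" using convex_R[of "Suc m" "n - m"] v(1) d
        unfolding convex_set_def E_def by blast
      then show False using nw v by simp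
    next
      case False
      with w2 obtain v' where "v' \<in> E" "w + ?l = v' + ?l" by auto
      then have "w \<in> E" by simp
      then show False using nw by simp
    qed
  qed
  then show ?case using mn by (simp add: E_def)
qed

lemma Iv_mono: "m \<le> m' \<Longrightarrow> Iv m \<subseteq> Iv m'"
  by (rule lift_Suc_mono_le[of Iv]) auto

theorem lemma2p5:
  fixes n :: nat and J :: "fgroup set"
  assumes "subinterval J (Iv (Suc n))" and "J \<noteq> Iv (Suc n)"
  shows "subinterval J (Iv n) \<or> subinterval J (lmult (ell n) (Iv n))"
proof -
  have "Iv n = lmult 0 (Iv n)" by (simp add: lmult_plus)
  then have Ivint: "Iv n \<in> intervals" "lmult (ell n) (Iv n) \<in> intervals"
    unfolding intervals_def by blast+
  have J: "J \<in> intervals" and JS: "J \<subseteq> Iv (Suc n)"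
    using assms(1) by (auto simp: subinterval_def)
  show ?thesis
  proof (cases "J = {}")
    case True then show ?thesis using Ivint J by (simp add: subinterval_def)
  next
    case False
    then obtain w m where Jw: "J = (\<lambda>s. w + s) ` Iv m"
      using J unfolding intervals_def by (auto simp: lmult_plus)
    show ?thesis
    proof (cases "m \<le> n")
      case False
      have "(\<lambda>s. w + s) ` Iv (Suc n) \<subseteq> Iv (Suc n)"
        using JS Jw Iv_mono[of "Suc n" m] False by auto
      then have "w \<in> R (Suc n) 0" using claim[of "Suc n" n w] by simp
      then have "w = 0" by simp
      then have "J = Iv m" using Jw by simp
      then have "J = Iv (Suc n)" using JS Iv_mono[of "Suc n" m] False by auto
      then show ?thesis using assms(2) by simp
    next
      case True
      have "w \<in> R m (Suc (n - m))"
        using claim[of m n w] JS Jw True by (simp add: Suc_diff_le)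
      then have w: "w \<in> R m (n - m) \<union> (\<lambda>s. ell n + s) ` R m (n - m)"
        using True by simp
      have In: "Iv n = (\<Union>x\<in>R m (n - m). (\<lambda>s. x + s) ` Iv m)"
        using F1[of m "n - m"] True by simp
      show ?thesis
      proof (cases "w \<in> R m (n - m)")
        case True
        then have "J \<subseteq> Iv n" unfolding Jw In by auto
        then show ?thesis using J Ivint by (simp add: subinterval_def)
      next
        case False
        with w obtain v where v: "v \<in> R m (n - m)" "w = ell n + v" by auto
        have "J \<subseteq> lmult (ell n) (Iv n)"
          unfolding Jw In lmult_plus using v by (auto simp: add.assoc)
        then show ?thesis using J Ivint by (simp add: subinterval_def)
      qed
    qed
  qed
qed

end
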